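(* Let $K$ be a field with an absolute value $v$, and let $\mathbb{C}_v$ denote the completion of an algebraic closure of $K$. Let $\phi(z)\in K[z]$ be a polynomial of degree $d\geq 2$, and let $\hat{\lambda}_{v,\phi}$ be the associated local canonical height. Write $\phi(z)=a_d z^d+\cdots+a_1 z+a_0=a_d(z-\alpha_1)\cdots(z-\alpha_d)$ with $a_i\in K$, $a_d\neq 0$, and $\alpha_i\in\mathbb{C}_v$. Let $A=\max\{|\alpha_i|_v : i=1,\ldots,d\}$ and $B=|a_d|_v^{-1/d}$, and define real constants $c_v,C_v\geq 1$ by $$c_v=\max\{1,A,B\}\quad\text{and}\quad C_v=\max\{1,|a_0|_v,|a_1|_v,\ldots,|a_d|_v\}$$ if $v$ is non-archimedean, or $$c_v=\max\{1,A+B\}\quad\text{and}\quad C_v=\max\{1,|a_0|_v+|a_1|_v+\cdots+|a_d|_v\}$$ if $v$ is archimedean. Then for all $x\in\mathbb{C}_v$, $$\frac{-d\log c_v}{d-1}\leq \hat{\lambda}_{v,\phi}(x)-\lambda_v(x)\leq \frac{\log C_v}{d-1}.$$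
   Context: The standard local height is $\lambda_v:\mathbb{C}_v\to[0,\infty)$, $\lambda_v(x)=\log\max\{1,|x|_v\}$. For a polynomial $\phi\in K[z]$ of degree $d\geq 2$, the local canonical height is $\hat{\lambda}_{v,\phi}(x)=\lim_{n\to\infty}d^{-n}\lambda_v(\phi^n(x))$ for $x\in\mathbb{C}_v$ (this limit exists), where $\phi^n$ denotes the $n$-th iterate of $\phi$ under composition. *)

theory Defs
  imports "HOL-Computational_Algebra.Polynomial" Complex_Main
begin

definition is_absolute_value :: "('a::field \<Rightarrow> real) \<Rightarrow> bool" where
  "is_absolute_value av \<longleftrightarrow>
     (\<forall>x. av x \<ge> 0) \<and> (\<forall>x. av x = 0 \<longleftrightarrow> x = 0) \<and>
     (\<forall>x y. av (x * y) = av x * av y) \<and>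
     (\<forall>x y. av (x + y) \<le> av x + av y)"

definition non_archimedean :: "('a::field \<Rightarrow> real) \<Rightarrow> bool" where
  "non_archimedean av \<longleftrightarrow> (\<forall>x y. av (x + y) \<le> max (av x) (av y))"

definition av_complete :: "('a::field \<Rightarrow> real) \<Rightarrow> bool" where
  "av_complete av \<longleftrightarrow>
     (\<forall>s :: nat \<Rightarrow> 'a.
        (\<forall>e>0. \<exists>N. \<forall>m\<ge>N. \<forall>n\<ge>N. av (s m - s n) < e) \<longrightarrow>
        (\<exists>L. \<forall>e>0. \<exists>N. \<forall>n\<ge>N. av (s n - L) < e))"

definition alg_closed :: "'a::field itself \<Rightarrow> bool" where
  "alg_closed _ \<longleftrightarrow> (\<forall>p :: 'a poly. degree p \<ge> 1 \<longrightarrow> (\<exists>z. poly p z = 0))"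

definition is_subfield :: "'a::field set \<Rightarrow> bool" where
  "is_subfield K \<longleftrightarrow> 0 \<in> K \<and> 1 \<in> K \<and>
     (\<forall>x\<in>K. \<forall>y\<in>K. x + y \<in> K \<and> x - y \<in> K \<and> x * y \<in> K) \<and>
     (\<forall>x\<in>K. inverse x \<in> K)"

definition local_height :: "('a::field \<Rightarrow> real) \<Rightarrow> 'a \<Rightarrow> real" where
  "local_height av x = ln (max 1 (av x))"

definition canonical_local_height :: "('a::field \<Rightarrow> real) \<Rightarrow> 'a poly \<Rightarrow> 'a \<Rightarrow> real" where
  "canonical_local_height av \<phi> x =
     lim (\<lambda>n. local_height av ((poly \<phi> ^^ n) x) / real (degree \<phi>) ^ n)"

text \<open>The constants \<open>c_v\<close> and \<open>C_v\<close>; \<open>\<alpha> 0, \<dots>, \<alpha> (d-1)\<close> are the roots.\<close>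
definition small_c :: "('a::field \<Rightarrow> real) \<Rightarrow> 'a poly \<Rightarrow> (nat \<Rightarrow> 'a) \<Rightarrow> real" where
  "small_c av \<phi> \<alpha> =
     (let d = degree \<phi>;
          A = Max ((\<lambda>i. av (\<alpha> i)) ` {..<d});
          B = av (lead_coeff \<phi>) powr (- 1 / real d)
      in if non_archimedean av then max 1 (max A B) else max 1 (A + B))"

definition big_C :: "('a::field \<Rightarrow> real) \<Rightarrow> 'a poly \<Rightarrow> real" where
  "big_C av \<phi> =
     (let d = degree \<phi>
      in if non_archimedean av then max 1 (Max ((\<lambda>i. av (coeff \<phi> i)) ` {..d}))
         else max 1 (\<Sum>i\<le>d. av (coeff \<phi> i)))"

end

theory Submission
  imports Defs
begin

lemma av_basic:
  assumes "is_absolute_value av"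
  shows "av x \<ge> 0" "av x = 0 \<longleftrightarrow> x = 0" "av (x*y) = av x * av y" "av (x+y) \<le> av x + av y"
  using assms unfolding is_absolute_value_def by auto

lemma av_one: assumes "is_absolute_value av" shows "av 1 = 1"
proof -
  have "av 1 = av 1 * av 1" using av_basic(3)[OF assms, of 1 1] by simp
  moreover have "av 1 \<noteq> 0" using av_basic(2)[OF assms, of 1] by simp
  ultimately show ?thesis by (metis mult_cancel_left1)
qed

lemma av_prod: assumes "is_absolute_value av"
  shows "av (\<Prod>i\<in>S. f i) = (\<Prod>i\<in>S. av (f i))"
proof (cases "finite S")
  case True then show ?thesis
    by (induction S rule: finite_induct) (auto simp: av_one[OF assms] av_basic(3)[OF assms])
qed (simp add: av_one[OF assms])

lemma av_power: assumes "is_absolute_value av" shows "av (x ^ n) = av x ^ n"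
  by (induction n) (auto simp: av_one[OF assms] av_basic(3)[OF assms])

lemma av_sum_le: assumes "is_absolute_value av"
  shows "av (\<Sum>i\<in>S. f i) \<le> (\<Sum>i\<in>S. av (f i))"
proof (cases "finite S")
  case True then show ?thesis
  proof (induction S rule: finite_induct)
    case empty then show ?case using av_basic(2)[OF assms, of 0] by simp
  next
    case (insert a F)
    then show ?case using av_basic(4)[OF assms, of "f a" "sum f F"] by simp
  qed
next
  case False
  have "av 0 = 0" using av_basic(2)[OF assms, of 0] by simp
  then show ?thesis using False by simp
qed

lemma av_sum_le_na: assumes "is_absolute_value av" "non_archimedean av"
  and "\<And>i. i \<in> S \<Longrightarrow> av (f i) \<le> M" "M \<ge> 0"
  shows "av (\<Sum>i\<in>S. f i) \<le> M"
proof (cases "finite S")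
  case True then show ?thesis using assms(3)
  proof (induction S rule: finite_induct)
    case empty then show ?case using av_basic(2)[OF assms(1), of 0] assms(4) by simp
  next
    case (insert a F)
    then have "av (f a + sum f F) \<le> max (av (f a)) (av (sum f F))"
      using assms(2) unfolding non_archimedean_def by blast
    moreover have "av (f a) \<le> M" using insert by simp
    moreover have "av (sum f F) \<le> M" using insert by simp
    ultimately show ?case using insert.hyps by simp
  qed
next
  case False
  have "av 0 = 0" using av_basic(2)[OF assms(1), of 0] by simp
  then show ?thesis using False assms(4) by simp
qed

lemma upper_step:
  assumes av: "is_absolute_value av" and deg: "degree \<phi> = d"
  shows "local_height av (poly \<phi> y) \<le> ln (big_C av \<phi>) + real d * local_height av y"
proof -
  define m where "m = max 1 (av y)"
  define C where "C = big_C av \<phi>"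
  have m1: "m \<ge> 1" by (simp add: m_def)
  have avy: "av y \<ge> 0" "av y \<le> m" using av_basic(1)[OF av] by (auto simp: m_def)
  have C1: "C \<ge> 1" by (simp add: C_def big_C_def Let_def)
  have tm: "av (coeff \<phi> i * y ^ i) \<le> av (coeff \<phi> i) * m ^ d" if "i \<le> d" for i
  proof -
    have "av y ^ i \<le> m ^ i" by (rule power_mono) (use avy in auto)
    also have "\<dots> \<le> m ^ d" by (rule power_increasing) (use that m1 in auto)
    finally have "av y ^ i \<le> m ^ d" .
    then show ?thesis
      by (simp add: av_basic(3)[OF av] av_power[OF av] mult_left_mono av_basic(1)[OF av])
  qed
  have md: "m ^ d \<ge> 1" using m1 by simp
  have P: "av (poly \<phi> y) \<le> C * m ^ d"
  proof (cases "non_archimedean av")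
    case True
    define M where "M = Max ((\<lambda>i. av (coeff \<phi> i)) ` {..d})"
    have CM: "C = max 1 M" using True by (simp add: C_def big_C_def Let_def deg M_def)
    have "av (\<Sum>i\<le>d. coeff \<phi> i * y ^ i) \<le> C * m ^ d"
    proof (rule av_sum_le_na[OF av True])
      fix i assume i: "i \<in> {..d}"
      have "av (coeff \<phi> i) \<le> M" unfolding M_def using i by (intro Max_ge) auto
      then have "av (coeff \<phi> i) \<le> C" using CM by simp
      then have "av (coeff \<phi> i) * m ^ d \<le> C * m ^ d" using md by (intro mult_right_mono) auto
      then show "av (coeff \<phi> i * y ^ i) \<le> C * m ^ d" using tm[of i] i by simp
    next
      show "0 \<le> C * m ^ d" using C1 md by simp
    qed
    then show ?thesis by (simp add: poly_altdef deg)
  next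
    case False
    have CS: "C = max 1 (\<Sum>i\<le>d. av (coeff \<phi> i))" using False by (simp add: C_def big_C_def Let_def deg)
    have "av (\<Sum>i\<le>d. coeff \<phi> i * y ^ i) \<le> (\<Sum>i\<le>d. av (coeff \<phi> i * y ^ i))"
      by (rule av_sum_le[OF av])
    also have "\<dots> \<le> (\<Sum>i\<le>d. av (coeff \<phi> i) * m ^ d)" by (intro sum_mono tm) auto
    also have "\<dots> = (\<Sum>i\<le>d. av (coeff \<phi> i)) * m ^ d" by (simp add: sum_distrib_right)
    also have "\<dots> \<le> C * m ^ d" using CS md by (intro mult_right_mono) auto
    finally show ?thesis by (simp add: poly_altdef deg)
  qed
  have one: "1 \<le> C * m ^ d" using mult_mono[OF C1 md] C1 by simp
  have "max 1 (av (poly \<phi> y)) \<le> C * m ^ d" using P one by simp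
  then have "ln (max 1 (av (poly \<phi> y))) \<le> ln (C * m ^ d)" by (subst ln_le_cancel_iff) auto
  also have "\<dots> = ln C + real d * ln m" using C1 m1 by (simp add: ln_mult ln_realpow)
  finally show ?thesis by (simp add: local_height_def C_def m_def)
qed

lemma lower_step:
  assumes av: "is_absolute_value av" and deg: "degree \<phi> = d" and d2: "d \<ge> 2"
    and fac: "\<forall>z. poly \<phi> z = lead_coeff \<phi> * (\<Prod>i<d. z - \<alpha> i)"
  shows "real d * local_height av y - real d * ln (small_c av \<phi> \<alpha>) \<le> local_height av (poly \<phi> y)"
proof -
  define A where "A = Max ((\<lambda>i. av (\<alpha> i)) ` {..<d})"
  define a where "a = av (lead_coeff \<phi>)"
  define B where "B = a powr (- 1 / real d)"
  define c where "c = (if non_archimedean av then max 1 (max A B) else max 1 (A + B))"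
  have c_eq: "small_c av \<phi> \<alpha> = c" by (simp add: small_c_def Let_def deg A_def B_def c_def a_def)
  have "\<phi> \<noteq> 0" using deg d2 by auto
  then have "lead_coeff \<phi> \<noteq> 0" by simp
  then have a0: "a > 0" using av_basic(1,2)[OF av, of "lead_coeff \<phi>"] by (simp add: a_def)
  have B0: "B > 0" using a0 by (simp add: B_def)
  have "B ^ d = B powr real d" using B0 by (simp add: powr_realpow)
  also have "\<dots> = a powr (- 1 / real d * real d)" by (simp add: B_def powr_powr)
  also have "\<dots> = inverse a" using d2 a0 by (simp add: powr_minus)
  finally have Bd: "B ^ d = inverse a" .
  have Ai: "av (\<alpha> i) \<le> A" if "i < d" for i unfolding A_def using that by (intro Max_ge) auto
  have A0: "A \<ge> 0" using Ai[of 0] d2 av_basic(1)[OF av, of "\<alpha> 0"] by simp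
  have c1: "c \<ge> 1" and cB: "c \<ge> B" and cA: "c \<ge> A" using B0 A0 by (auto simp: c_def)
  have lh0: "local_height av (poly \<phi> y) \<ge> 0" by (simp add: local_height_def)
  show ?thesis
  proof (cases "av y \<le> c")
    case True
    have "max 1 (av y) \<le> c" using True c1 by simp
    then have "ln (max 1 (av y)) \<le> ln c" by (subst ln_le_cancel_iff) auto
    then have "real d * ln (max 1 (av y)) \<le> real d * ln c" by (intro mult_left_mono) auto
    moreover have "ln (max 1 (av (poly \<phi> y))) \<ge> 0" by simp
    ultimately show ?thesis unfolding c_eq local_height_def by linarith
  next
    case False
    then have yc: "av y > c" by simp
    have y0: "av y > 0" using yc c1 by simp
    define t where "t = (if non_archimedean av then av y else av y - A)"
    have t0: "t \<ge> 0" using yc cA y0 by (auto simp: t_def)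
    have ti: "t \<le> av (y - \<alpha> i)" if i: "i < d" for i
    proof (cases "non_archimedean av")
      case True
      have "av ((y - \<alpha> i) + \<alpha> i) \<le> max (av (y - \<alpha> i)) (av (\<alpha> i))"
        using True unfolding non_archimedean_def by blast
      moreover have "av (\<alpha> i) < av y" using Ai[OF i] cA yc by simp
      ultimately show ?thesis using True by (auto simp: t_def max_def split: if_splits)
    next
      case False
      have "av ((y - \<alpha> i) + \<alpha> i) \<le> av (y - \<alpha> i) + av (\<alpha> i)" by (rule av_basic(4)[OF av])
      then show ?thesis using False Ai[OF i] by (simp add: t_def)
    qed
    have key: "av y * B \<le> t * c"
    proof (cases "non_archimedean av")
      case True
      then show ?thesis using cB y0 by (simp add: t_def mult.commute mult_left_mono)
    next
      case False
      then have cAB: "c \<ge> A + B" by (simp add: c_def)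
      have e1: "av y * (c - B) \<ge> av y * A" using cAB y0 by (intro mult_left_mono) auto
      have e2: "A * (av y - c) \<ge> 0" using A0 yc by simp
      have "t * c - av y * B = av y * (c - B) - A * c" using False by (simp add: t_def algebra_simps)
      also have "\<dots> \<ge> av y * A - A * c" using e1 by simp
      also have "av y * A - A * c = A * (av y - c)" by (simp add: algebra_simps)
      finally show ?thesis using e2 by simp
    qed
    have ratio: "av y / c \<le> t / B" using key B0 c1 by (simp add: field_simps)
    have "av (poly \<phi> y) = a * (\<Prod>i<d. av (y - \<alpha> i))"
      using fac by (simp add: av_basic(3)[OF av] av_prod[OF av] a_def)
    also have "\<dots> \<ge> a * (\<Prod>i<d. t)" using a0 t0 ti
      by (intro mult_left_mono prod_mono) auto
    finally have P1: "av (poly \<phi> y) \<ge> a * t ^ d" by simp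
    have "a * t ^ d = (t / B) ^ d" proof -
      have "(t / B) ^ d = t ^ d / B ^ d" by (rule power_divide)
      also have "\<dots> = t ^ d * a" using Bd a0 by (simp add: divide_inverse)
      finally show ?thesis by simp
    qed
    also have "\<dots> \<ge> (av y / c) ^ d" using ratio y0 c1 by (intro power_mono) auto
    finally have P2: "av (poly \<phi> y) \<ge> (av y / c) ^ d" using P1 by simp
    have pos: "(av y / c) ^ d > 0" using y0 c1 by simp
    have "real d * ln (av y) - real d * ln c = ln ((av y / c) ^ d)"
      using y0 c1 by (simp add: ln_realpow ln_div algebra_simps)
    also have "\<dots> \<le> ln (max 1 (av (poly \<phi> y)))" using P2 pos by (subst ln_le_cancel_iff) auto
    finally show ?thesis using yc c1 c_eq by (simp add: local_height_def)
  qed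
qed

theorem proposition2p1:
  fixes av :: "'a::field \<Rightarrow> real" and K :: "'a set"
    and \<phi> :: "'a poly" and d :: nat and \<alpha> :: "nat \<Rightarrow> 'a" and x :: 'a
  assumes "is_absolute_value av"
    and "av_complete av"
    and "alg_closed TYPE('a)"
    and "is_subfield K"
    and "\<forall>i. coeff \<phi> i \<in> K"
    and "degree \<phi> = d" and "d \<ge> 2"
    and "\<forall>z. poly \<phi> z = lead_coeff \<phi> * (\<Prod>i<d. z - \<alpha> i)"
  shows "- real d * ln (small_c av \<phi> \<alpha>) / (real d - 1)
           \<le> canonical_local_height av \<phi> x - local_height av x
       \<and> canonical_local_height av \<phi> x - local_height av x
           \<le> ln (big_C av \<phi>) / (real d - 1)"
proof -
  note av = assms(1) and deg = assms(6) and d2 = assms(7) and fac = assms(8)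
  define D where "D = real d"
  have D1: "D > 1" using d2 by (simp add: D_def)
  define L where "L n = local_height av ((poly \<phi> ^^ n) x)" for n
  define g where "g k = (L (Suc k) - D * L k) / D ^ Suc k" for k
  define lc where "lc = ln (small_c av \<phi> \<alpha>)"
  define lC where "lC = ln (big_C av \<phi>)"
  define q where "q = 1 / D"
  define h where "h k = q ^ Suc k" for k
  have q: "q > 0" "q < 1" using D1 by (auto simp: q_def)
  have bnd: "- D * lc \<le> L (Suc k) - D * L k \<and> L (Suc k) - D * L k \<le> lC" for k
    using lower_step[OF av deg d2 fac, of "(poly \<phi> ^^ k) x"]
      upper_step[OF av deg, of "(poly \<phi> ^^ k) x"]
    by (simp add: L_def D_def lc_def lC_def)
  have hq: "h k = 1 / D ^ Suc k" for k by (simp add: h_def q_def power_one_over)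
  have gU: "g k \<le> lC * h k" for k
    using bnd[of k] D1 by (simp add: g_def hq divide_right_mono)
  have gL: "(- D * lc) * h k \<le> g k" for k
  proof -
    have "(- D * lc) / D ^ Suc k \<le> (L (Suc k) - D * L k) / D ^ Suc k"
      using bnd[of k] D1 by (intro divide_right_mono) auto
    then show ?thesis by (simp only: g_def hq times_divide_eq_right mult_1_right)
  qed
  have hs: "h sums (q * (1 / (1 - q)))"
  proof -
    have "(\<lambda>k. q * q ^ k) sums (q * (1 / (1 - q)))"
      using geometric_sums[of q] q by (intro sums_mult) auto
    moreover have "h = (\<lambda>k. q * q ^ k)" by (rule ext) (simp add: h_def)
    ultimately show ?thesis by simp
  qed
  have qv: "q * (1 / (1 - q)) = 1 / (D - 1)" using D1 by (simp add: q_def field_simps)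
  have hs': "h sums (1 / (D - 1))" using hs qv by simp
  have h0: "h k \<ge> 0" for k using q by (simp add: h_def)
  have gsum: "summable g"
  proof (rule summable_comparison_test')
    show "summable (\<lambda>k. (\<bar>lC\<bar> + \<bar>D * lc\<bar>) * h k)"
      using hs' by (intro summable_mult) (auto simp: sums_iff)
    fix k :: nat
    have "g k \<le> \<bar>lC\<bar> * h k" using gU[of k] h0[of k]
      by (meson abs_ge_self mult_right_mono order_trans)
    moreover have "- g k \<le> \<bar>D * lc\<bar> * h k" using gL[of k] h0[of k]
      by (smt (verit) abs_ge_self mult_minus_left mult_right_mono)
    ultimately show "norm (g k) \<le> (\<bar>lC\<bar> + \<bar>D * lc\<bar>) * h k" using h0[of k]
      by (simp add: distrib_right abs_le_iff) (smt (verit) abs_ge_zero mult_nonneg_nonneg)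
  qed
  define S where "S = suminf g"
  have gS: "g sums S" using gsum by (simp add: S_def summable_sums)
  have SU: "S \<le> lC / (D - 1)"
    using sums_le[OF gU gS sums_mult[OF hs', of lC]] by simp
  have SL: "- D * lc / (D - 1) \<le> S"
    using sums_le[OF gL sums_mult[OF hs', of "- D * lc"] gS] by simp
  have tel: "L n / D ^ n = L 0 + (\<Sum>k<n. g k)" for n
  proof (induction n)
    case 0 then show ?case by simp
  next
    case (Suc n)
    have "L (Suc n) / D ^ Suc n = L n / D ^ n + g n"
      using D1 by (simp add: g_def field_simps)
    then show ?case using Suc by simp
  qed
  have "(\<lambda>n. L 0 + (\<Sum>k<n. g k)) \<longlonglongrightarrow> L 0 + S"
    using gS by (intro tendsto_add tendsto_const) (simp add: sums_def)
  then have "(\<lambda>n. L n / D ^ n) \<longlonglongrightarrow> L 0 + S" using tel by simp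
  then have "canonical_local_height av \<phi> x = L 0 + S"
    unfolding canonical_local_height_def by (simp add: deg D_def L_def limI)
  moreover have "L 0 = local_height av x" by (simp add: L_def)
  ultimately show ?thesis using SU SL by (simp add: D_def lc_def lC_def)
qed

end
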